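(* Let $m \ge 2$, let $\varepsilon \le \frac{1}{2^{3m}\cdot 4m}$ be a power of 2, and let $\mathcal{G} = \{2^{-i}\varepsilon j : i \in \mathbb{Z},\ j \in \{1,\dots,2/\varepsilon^2 - 1\}\} \cap (0,1)$. Then for any $0 < q < 1$ there exists $z \in \mathcal{G}$ with $1.5\varepsilon q \le q - z \le 2\varepsilon z$. *)

theory Defs
  imports Complex_Main
begin

definition grid :: "real \<Rightarrow> real set" where
  "grid eps = {x. \<exists>(i::int) (j::nat). 1 \<le> real j \<and> real j \<le> 2 / eps\<^sup>2 - 1 \<and>
                   x = 2 powr (- real_of_int i) * eps * real j} \<inter> {0<..<1}"

end

theory Submission
  imports Defs
begin

theorem claim12:
  fixes m :: nat and eps q :: real
  assumes "m \<ge> 2"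
    and "\<exists>k::int. eps = 2 powr (real_of_int k)"
    and "eps \<le> 1 / (2 ^ (3 * m) * (4 * real m))"
    and "0 < q" and "q < 1"
  shows "\<exists>z\<in>grid eps. 1.5 * eps * q \<le> q - z \<and> q - z \<le> 2 * eps * z"
proof -
  from assms(2) obtain k :: int where ek: "eps = 2 powr k" by blast
  have ep: "eps > 0" using ek by simp
  have "(2::real) ^ 6 \<le> 2 ^ (3 * m)" by (rule power_increasing) (use assms(1) in auto)
  hence p64: "(64::real) \<le> 2 ^ (3 * m)" by simp
  have "(8::real) \<le> 4 * real m" using assms(1) by simp
  hence "64 * 8 \<le> (2::real) ^ (3 * m) * (4 * real m)" using p64
    by (intro mult_mono) auto
  hence "1 / (2 ^ (3 * m) * (4 * real m)) \<le> 1 / (64 * 8 :: real)"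
    by (intro divide_left_mono) auto
  hence esmall: "eps \<le> 1/512" using assms(3) by (smt (verit))
  define i :: int where "i = \<lceil>log 2 (4 / q)\<rceil>"
  define s :: real where "s = 2 powr (- real_of_int i)"
  have sp: "s > 0" unfolding s_def by simp
  have "2 powr (real_of_int i) \<ge> 2 powr (log 2 (4/q))"
    unfolding i_def by (intro powr_mono) auto
  hence i1: "2 powr (real_of_int i) \<ge> 4 / q" using assms(4) by simp
  have "2 powr (real_of_int i) < 2 powr (log 2 (4/q) + 1)"
    unfolding i_def by (intro powr_less_mono) linarith+
  hence i2: "2 powr (real_of_int i) < 8 / q" using assms(4) by (simp add: powr_add)
  have sinv: "s * 2 powr (real_of_int i) = 1" unfolding s_def by (simp add: powr_add[symmetric])
  have s1: "s \<le> q / 4"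
  proof -
    have "s * (4/q) \<le> s * 2 powr (real_of_int i)" using i1 sp by (intro mult_left_mono) auto
    thus ?thesis using sinv assms(4) by (simp add: field_simps)
  qed
  have s2: "s > q / 8"
  proof -
    have "s * (8/q) > s * 2 powr (real_of_int i)" using i2 sp by (intro mult_strict_left_mono) auto
    thus ?thesis using sinv assms(4) by (simp add: field_simps)
  qed
  define a where "a = q / ((1 + 2*eps) * s * eps)"
  have ap: "a > 0" unfolding a_def using assms(4) ep sp by simp
  define j :: nat where "j = nat \<lceil>a\<rceil>"
  have jge: "real j \<ge> a" unfolding j_def by linarith
  have jle: "real j < a + 1" unfolding j_def using ap by (simp add: ceiling_less_iff) linarith
  have j1: "1 \<le> real j" unfolding j_def using ap by (simp add: le_nat_iff)
  define z where "z = s * eps * real j"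
  have se: "s * eps > 0" using sp ep by simp
  have zlo: "z \<ge> q / (1 + 2*eps)"
  proof -
    have "z \<ge> s * eps * a" unfolding z_def using jge se by (intro mult_left_mono) auto
    moreover have "s * eps * a = q / (1 + 2*eps)" unfolding a_def using sp ep by (simp add: divide_simps)
    ultimately show ?thesis by simp
  qed
  have zhi: "z \<le> q / (1 + 2*eps) + s * eps"
  proof -
    have "z \<le> s * eps * (a + 1)" unfolding z_def using jle se by (intro mult_left_mono) auto
    moreover have "s * eps * a = q / (1 + 2*eps)" unfolding a_def using sp ep by (simp add: divide_simps)
    ultimately show ?thesis by (simp add: distrib_left)
  qed
  have se2: "s * eps \<le> q/4 * eps" using s1 ep by (intro mult_right_mono) auto
  have key: "q / (1 + 2*eps) + q/4*eps \<le> q * (1 - (3/2)*eps)"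
  proof -
    have ee: "eps * eps \<le> eps * (1/512)" using ep esmall by (intro mult_left_mono) auto
    have "(1 + 2*eps) * (1 - (7/4)*eps) = 1 + eps/4 - 7/2 * (eps * eps)" by (simp add: field_simps)
    hence "1 \<le> (1 + 2*eps) * (1 - (7/4)*eps)" using ep ee by linarith
    hence "1 / (1 + 2*eps) \<le> 1 - (7/4)*eps" using ep pos_divide_le_eq[of "1+2*eps" 1 "1 - (7/4)*eps"]
      by (simp add: mult.commute)
    hence "q * (1 / (1 + 2*eps)) \<le> q * (1 - (7/4)*eps)" using assms(4) by (intro mult_left_mono) auto
    moreover have "q * (1 / (1 + 2*eps)) = q / (1 + 2*eps)" by simp
    moreover have "q * (1 - (7/4)*eps) = q - (7/4) * (q*eps)" by (simp add: algebra_simps)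
    moreover have "q * (1 - (3/2)*eps) = q - (3/2) * (q*eps)" by (simp add: algebra_simps)
    moreover have "q/4*eps = (1/4) * (q*eps)" by simp
    moreover have "q*eps > 0" using ep assms(4) by simp
    ultimately have h1: "q / (1 + 2*eps) \<le> q - (7/4) * (q*eps)"
      and h2: "q * (1 - (3/2)*eps) = q - (3/2) * (q*eps)" and h3: "q/4*eps = (1/4) * (q*eps)" by simp_all
    have gen: "\<And>A B P C::real. A \<le> q - (7/4) * P \<Longrightarrow> B = (1/4) * P \<Longrightarrow> C = q - (3/2) * P \<Longrightarrow> A + B \<le> C"
      by linarith
    show ?thesis by (rule gen[OF h1 h3 h2])
  qed
  have zhi2: "z \<le> q * (1 - (3/2)*eps)"
  proof -
    have "z \<le> q / (1 + 2*eps) + q/4*eps" using zhi se2 by (rule order_trans[OF _ add_left_mono])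
    thus ?thesis using key by (rule order_trans)
  qed
  have zpos: "z > 0" unfolding z_def using se j1 by simp
  have z1: "z < 1"
  proof -
    have "q * (1 - (3/2)*eps) = q - (3/2) * (q*eps)" by (simp add: algebra_simps)
    moreover have "q*eps > 0" using ep assms(4) by simp
    ultimately have "q * (1 - (3/2)*eps) < 1" using assms(5) by linarith
    thus ?thesis using zhi2 by simp
  qed
  have jN: "real j \<le> 2 / eps\<^sup>2 - 1"
  proof -
    have "1 * (s * eps) \<le> (1+2*eps) * (s * eps)" using se ep by (intro mult_right_mono) auto
    hence "s * eps \<le> (1+2*eps) * s * eps" by (simp add: mult.assoc)
    hence "a \<le> q / (s * eps)" unfolding a_def using assms(4) se
      by (intro divide_left_mono) auto
    moreover have "q / s < 8" using s2 sp by (simp add: divide_less_eq)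
    hence "q / s / eps \<le> 8 / eps" using ep by (intro divide_right_mono) auto
    moreover have "q / (s * eps) = q / s / eps" by simp
    ultimately have ja: "a \<le> 8 / eps" by linarith
    define u where "u = 1 / eps"
    have u: "u \<ge> 512" unfolding u_def using ep esmall by (simp add: le_divide_eq)
    have "u * u \<ge> 512 * u" using u by (intro mult_right_mono) auto
    hence "8 * u + 2 \<le> 2 * (u * u)" using u by linarith
    moreover have "8 / eps = 8 * u" "2 / eps\<^sup>2 = 2 * (u * u)" unfolding u_def
      by (simp_all add: power2_eq_square)
    ultimately show ?thesis using ja jle by linarith
  qed
  have zg: "z \<in> grid eps" unfolding grid_def
  proof (rule IntI)
    show "z \<in> {0<..<1}" using zpos z1 by simp
    show "z \<in> {x. \<exists>(i::int) (j::nat). 1 \<le> real j \<and> real j \<le> 2 / eps\<^sup>2 - 1 \<and>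
                   x = 2 powr (- real_of_int i) * eps * real j}"
      using j1 jN unfolding z_def s_def by blast
  qed
  have c1: "1.5 * eps * q \<le> q - z" using zhi2 by (simp add: algebra_simps)
  have c2: "q - z \<le> 2 * eps * z"
  proof -
    have "q \<le> z * (1 + 2*eps)" using zlo ep by (simp add: field_simps)
    thus ?thesis by (simp add: algebra_simps)
  qed
  show ?thesis using zg c1 c2 by blast
qed

end
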